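(* Let $\mathbb O=\{-m,\dots,0,\dots,M\}$ with integers $m,M\ge1$, and $\theta=0$. For every $x(0)\in\mathbb O^n$: if there exists a finite legal update sequence starting from $x(0)$ along which the opinion trajectory reaches the consensus state $(0,\dots,0)$, then there exists a finite legal update sequence starting from $x(0)$ containing no crossing update along which the opinion trajectory reaches $(0,\dots,0)$.
   Context: Let $n\ge1$, $\mathcal V=\{1,\dots,n\}$, and let $W=(w_{ij})$ be an $n\times n$ row-stochastic matrix. For $x\in\mathbb O^n$, $i\in\mathcal V$, $z\in\mathbb O$, define $C^i_{\mathrm{social}}(z;x)=\sum_{j=1}^n w_{ij}|z-x_j|$ and $P_i(x)=\{z\in\mathbb O: C^i_{\mathrm{social}}(z;x)\le C^i_{\mathrm{social}}(x_i;x),\ |z-\theta|\le |x_i-\theta|\}$. A legal update sequence from $x(0)$ is a finite sequence $(i_1,z_1),\dots,(i_T,z_T)$ with $i_t\in\mathcal V$, generating $x(1),\dots,x(T)$ where $x(t)$ is obtained from $x(t-1)$ by setting coordinate $i_t$ to $z_t$, such that $z_t\in P_{i_t}(x(t-1))$ for every $t$. The update at step $t$ is a crossing update if $(x_{i_t}(t)-\theta)(x_{i_t}(t-1)-\theta)<0$. *)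

theory Defs
  imports Complex_Main
begin

text \<open>Agents are V = {1..n}; a state is a function nat => int, only its values on {1..n} matter.
  W is given as a function nat => nat => real, meaningful on {1..n} x {1..n}.\<close>

definition opinions :: "int \<Rightarrow> int \<Rightarrow> int set" where
  "opinions m M = {-m..M}"

definition row_stochastic :: "nat \<Rightarrow> (nat \<Rightarrow> nat \<Rightarrow> real) \<Rightarrow> bool" where
  "row_stochastic n W \<longleftrightarrow>
     (\<forall>i\<in>{1..n}. \<forall>j\<in>{1..n}. W i j \<ge> 0) \<and> (\<forall>i\<in>{1..n}. (\<Sum>j=1..n. W i j) = 1)"

definition C_social :: "nat \<Rightarrow> (nat \<Rightarrow> nat \<Rightarrow> real) \<Rightarrow> nat \<Rightarrow> int \<Rightarrow> (nat \<Rightarrow> int) \<Rightarrow> real" where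
  "C_social n W i z x = (\<Sum>j=1..n. W i j * real_of_int \<bar>z - x j\<bar>)"

definition P_set :: "int set \<Rightarrow> int \<Rightarrow> nat \<Rightarrow> (nat \<Rightarrow> nat \<Rightarrow> real) \<Rightarrow> nat \<Rightarrow> (nat \<Rightarrow> int) \<Rightarrow> int set" where
  "P_set O\<^sub>s \<theta> n W i x =
     {z \<in> O\<^sub>s. C_social n W i z x \<le> C_social n W i (x i) x \<and> \<bar>z - \<theta>\<bar> \<le> \<bar>x i - \<theta>\<bar>}"

text \<open>Trajectory generated by an update sequence: traj x us t = x(t), for t <= length us.\<close>
fun traj :: "(nat \<Rightarrow> int) \<Rightarrow> (nat \<times> int) list \<Rightarrow> nat \<Rightarrow> nat \<Rightarrow> int" where
  "traj x us 0 = x"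
| "traj x us (Suc t) = (traj x us t)(fst (us ! t) := snd (us ! t))"

definition legal_seq :: "int set \<Rightarrow> int \<Rightarrow> nat \<Rightarrow> (nat \<Rightarrow> nat \<Rightarrow> real) \<Rightarrow> (nat \<Rightarrow> int) \<Rightarrow> (nat \<times> int) list \<Rightarrow> bool" where
  "legal_seq O\<^sub>s \<theta> n W x us \<longleftrightarrow>
     (\<forall>t < length us. fst (us ! t) \<in> {1..n} \<and>
        snd (us ! t) \<in> P_set O\<^sub>s \<theta> n W (fst (us ! t)) (traj x us t))"

definition crossing_update :: "int \<Rightarrow> (nat \<Rightarrow> int) \<Rightarrow> (nat \<times> int) list \<Rightarrow> nat \<Rightarrow> bool" where
  "crossing_update \<theta> x us t \<longleftrightarrow>
     (let i = fst (us ! t) in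
        (traj x us (Suc t) i - \<theta>) * (traj x us t i - \<theta>) < 0)"

definition consensus_zero :: "nat \<Rightarrow> (nat \<Rightarrow> int) \<Rightarrow> bool" where
  "consensus_zero n y \<longleftrightarrow> (\<forall>j\<in>{1..n}. y j = 0)"

definition reaches :: "nat \<Rightarrow> (nat \<Rightarrow> int) \<Rightarrow> (nat \<times> int) list \<Rightarrow> bool" where
  "reaches n x us \<longleftrightarrow> (\<exists>t \<le> length us. consensus_zero n (traj x us t))"

end

theory Submission
  imports Defs
begin

lemma traj_Cons: "traj x (u#us) (Suc t) = traj (x(fst u := snd u)) us t"
  by (induction t) (simp_all only: traj.simps nth_Cons_0 nth_Cons_Suc)

lemma legal_Cons: "legal_seq Os th n W x (u#us) \<longleftrightarrow>
   fst u \<in> {1..n} \<and> snd u \<in> P_set Os th n W (fst u) x \<and> legal_seq Os th n W (x(fst u := snd u)) us"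
  unfolding legal_seq_def
  by (auto simp: less_Suc_eq_0_disj traj_Cons simp del: traj.simps(2))

lemma legal_Nil: "legal_seq Os th n W x []"
  unfolding legal_seq_def by simp

lemma cross_Cons0: "crossing_update th x (u#us) 0 \<longleftrightarrow>
   (snd u - th) * (x (fst u) - th) < 0"
  unfolding crossing_update_def by simp

lemma cross_ConsS: "crossing_update th x (u#us) (Suc t) \<longleftrightarrow> crossing_update th (x(fst u := snd u)) us t"
  unfolding crossing_update_def by (simp only: traj_Cons nth_Cons_Suc)

lemma reaches_Cons: "reaches n x (u#us) \<longleftrightarrow> consensus_zero n x \<or> reaches n (x(fst u := snd u)) us"
  unfolding reaches_def
proof
  assume "\<exists>t\<le>length (u # us). consensus_zero n (traj x (u # us) t)"
  then obtain t where t: "t \<le> length (u # us)" "consensus_zero n (traj x (u # us) t)" by blast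
  show "consensus_zero n x \<or> (\<exists>t\<le>length us. consensus_zero n (traj (x(fst u := snd u)) us t))"
  proof (cases t)
    case 0 then show ?thesis using t by simp
  next
    case (Suc k) then show ?thesis using t by (metis Suc_le_mono length_Cons traj_Cons)
  qed
next
  assume "consensus_zero n x \<or> (\<exists>t\<le>length us. consensus_zero n (traj (x(fst u := snd u)) us t))"
  then show "\<exists>t\<le>length (u # us). consensus_zero n (traj x (u # us) t)"
    by (metis Suc_le_mono length_Cons traj.simps(1) traj_Cons zero_le)
qed

lemma reaches_Nil: "reaches n x [] \<longleftrightarrow> consensus_zero n x"
  unfolding reaches_def by simp

lemma abs_key: "(z::int) * a \<ge> 0 \<Longrightarrow> \<bar>z\<bar> \<le> \<bar>a\<bar> \<Longrightarrow> \<bar>z\<bar> - \<bar>a\<bar> \<le> \<bar>z - u\<bar> - \<bar>a - u\<bar>"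
  by (smt (verit) mult_nonneg_nonneg mult_nonpos_nonpos zero_le_mult_iff)

lemma abs_convex: "(z::int) * a < 0 \<Longrightarrow> (\<bar>a\<bar> + \<bar>z\<bar>) * \<bar>u\<bar> \<le> \<bar>z\<bar> * \<bar>a - u\<bar> + \<bar>a\<bar> * \<bar>z - u\<bar>"
proof -
  assume h: "z * a < 0"
  have "\<bar>z * (a - u) - a * (z - u)\<bar> \<le> \<bar>z\<bar> * \<bar>a - u\<bar> + \<bar>a\<bar> * \<bar>z - u\<bar>"
    by (metis abs_mult abs_triangle_ineq4)
  moreover have "\<bar>z * (a - u) - a * (z - u)\<bar> = \<bar>a - z\<bar> * \<bar>u\<bar>"
    by (simp add: algebra_simps abs_mult[symmetric])
  moreover have "\<bar>a - z\<bar> = \<bar>a\<bar> + \<bar>z\<bar>" using h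
    by (smt (verit) mult_nonneg_nonneg mult_nonpos_nonpos)
  ultimately show ?thesis by simp
qed

lemma transfer:
  assumes nn: "\<forall>j\<in>{1..n}. W i j \<ge> 0"
    and yx: "\<forall>j\<in>{1..n}. y j = x j \<or> y j = 0"
    and za: "z * a \<ge> 0" "\<bar>z\<bar> \<le> \<bar>a\<bar>"
    and c: "C_social n W i z x \<le> C_social n W i a x"
  shows "C_social n W i z y \<le> C_social n W i a y"
proof -
  have "C_social n W i z y - C_social n W i a y = (\<Sum>j=1..n. W i j * (real_of_int \<bar>z - y j\<bar> - real_of_int \<bar>a - y j\<bar>))"
    unfolding C_social_def by (simp add: sum_subtractf[symmetric] algebra_simps)
  also have "\<dots> \<le> (\<Sum>j=1..n. W i j * (real_of_int \<bar>z - x j\<bar> - real_of_int \<bar>a - x j\<bar>))"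
  proof (rule sum_mono)
    fix j assume j: "j \<in> {1..n}"
    have "real_of_int \<bar>z - y j\<bar> - real_of_int \<bar>a - y j\<bar> \<le> real_of_int \<bar>z - x j\<bar> - real_of_int \<bar>a - x j\<bar>"
    proof (cases "y j = x j")
      case False
      then have "y j = 0" using yx j by auto
      then show ?thesis using abs_key[OF za, of "x j"] by simp
    qed simp
    then show "W i j * (real_of_int \<bar>z - y j\<bar> - real_of_int \<bar>a - y j\<bar>) \<le> W i j * (real_of_int \<bar>z - x j\<bar> - real_of_int \<bar>a - x j\<bar>)"
      using nn j by (simp add: mult_left_mono)
  qed
  also have "\<dots> = C_social n W i z x - C_social n W i a x"
    unfolding C_social_def by (simp add: sum_subtractf[symmetric] algebra_simps)
  finally show ?thesis using c by simp
qed

lemma convex: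
  assumes nn: "\<forall>j\<in>{1..n}. W i j \<ge> 0"
    and za: "z * a < 0"
    and c: "C_social n W i z x \<le> C_social n W i a x"
  shows "C_social n W i 0 x \<le> C_social n W i a x"
proof -
  have "(real_of_int \<bar>a\<bar> + real_of_int \<bar>z\<bar>) * C_social n W i 0 x
      \<le> real_of_int \<bar>z\<bar> * C_social n W i a x + real_of_int \<bar>a\<bar> * C_social n W i z x"
    unfolding C_social_def sum_distrib_left sum.distrib[symmetric]
  proof (rule sum_mono)
    fix j assume j: "j \<in> {1..n}"
    have "real_of_int ((\<bar>a\<bar> + \<bar>z\<bar>) * \<bar>0 - x j\<bar>) \<le> real_of_int (\<bar>z\<bar> * \<bar>a - x j\<bar> + \<bar>a\<bar> * \<bar>z - x j\<bar>)"
      using abs_convex[OF za, of "x j"] by (simp only: of_int_le_iff diff_0 abs_minus_cancel)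
    then have "W i j * real_of_int ((\<bar>a\<bar> + \<bar>z\<bar>) * \<bar>0 - x j\<bar>) \<le> W i j * real_of_int (\<bar>z\<bar> * \<bar>a - x j\<bar> + \<bar>a\<bar> * \<bar>z - x j\<bar>)"
      using nn j by (simp add: mult_left_mono)
    then show "(real_of_int \<bar>a\<bar> + real_of_int \<bar>z\<bar>) * (W i j * real_of_int \<bar>0 - x j\<bar>)
         \<le> real_of_int \<bar>z\<bar> * (W i j * real_of_int \<bar>a - x j\<bar>) + real_of_int \<bar>a\<bar> * (W i j * real_of_int \<bar>z - x j\<bar>)"
      by (simp add: algebra_simps)
  qed
  also have "\<dots> \<le> real_of_int \<bar>z\<bar> * C_social n W i a x + real_of_int \<bar>a\<bar> * C_social n W i a x"
    using c by (simp add: mult_left_mono)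
  finally have "(real_of_int \<bar>a\<bar> + real_of_int \<bar>z\<bar>) * C_social n W i 0 x \<le> (real_of_int \<bar>a\<bar> + real_of_int \<bar>z\<bar>) * C_social n W i a x"
    by (simp add: algebra_simps)
  moreover have "real_of_int \<bar>a\<bar> + real_of_int \<bar>z\<bar> > 0" using za
    by (smt (verit) mult_eq_0_iff of_int_0_less_iff zero_less_abs_iff)
  ultimately show ?thesis by simp
qed

lemma main:
  assumes "legal_seq Os 0 n W x us" "reaches n x us" "0 \<in> Os"
    "\<forall>i\<in>{1..n}. \<forall>j\<in>{1..n}. W i j \<ge> 0"
    "\<forall>j\<in>{1..n}. y j = x j \<or> y j = 0"
  shows "\<exists>vs. legal_seq Os 0 n W y vs \<and> (\<forall>t < length vs. \<not> crossing_update 0 y vs t) \<and> reaches n y vs"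
  using assms
proof (induction us arbitrary: x y)
  case Nil
  then have "consensus_zero n y" by (auto simp: reaches_Nil consensus_zero_def)
  then show ?case by (intro exI[of _ "[]"]) (auto simp: legal_Nil reaches_Nil)
next
  case (Cons u us)
  obtain i z where u: "u = (i, z)" by force
  show ?case
  proof (cases "consensus_zero n x")
    case True
    then have "consensus_zero n y" using Cons.prems by (auto simp: consensus_zero_def)
    then show ?thesis by (intro exI[of _ "[]"]) (auto simp: legal_Nil reaches_Nil)
  next
    case False
    have i: "i \<in> {1..n}" and zP: "z \<in> P_set Os 0 n W i x" and lx: "legal_seq Os 0 n W (x(i := z)) us"
      using Cons.prems(1) u by (auto simp: legal_Cons)
    have rx: "reaches n (x(i := z)) us" using Cons.prems(2) False u by (simp add: reaches_Cons)
    have nn: "\<forall>j\<in>{1..n}. W i j \<ge> 0" using Cons.prems(4) i by auto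
    have zO: "z \<in> Os" and cz: "C_social n W i z x \<le> C_social n W i (x i) x" and az: "\<bar>z\<bar> \<le> \<bar>x i\<bar>"
      using zP by (auto simp: P_set_def)
    define z' where "z' = (if y i = x i \<and> z * x i \<ge> 0 then z else 0)"
    have z'P: "z' \<in> P_set Os 0 n W i y"
    proof (cases "y i = x i \<and> z * x i \<ge> 0")
      case True
      then show ?thesis using transfer[of n W i y x z "x i"] nn Cons.prems(5) cz az zO
        by (auto simp: z'_def P_set_def)
    next
      case F: False
      show ?thesis
      proof (cases "y i = x i")
        case True
        then have "z * x i < 0" using F by auto
        then have "C_social n W i 0 x \<le> C_social n W i (x i) x" using convex[OF nn _ cz] by simp
        then show ?thesis using transfer[of n W i y x 0 "x i"] nn Cons.prems(5) True F Cons.prems(3)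
          by (auto simp: z'_def P_set_def)
      next
        case False
        then have "y i = 0" using Cons.prems(5) i by auto
        then show ?thesis using F Cons.prems(3) by (auto simp: z'_def P_set_def)
      qed
    qed
    have inv: "\<forall>j\<in>{1..n}. (y(i := z')) j = (x(i := z)) j \<or> (y(i := z')) j = 0"
      using Cons.prems(5) by (auto simp: z'_def)
    obtain vs where vs: "legal_seq Os 0 n W (y(i := z')) vs" "\<forall>t < length vs. \<not> crossing_update 0 (y(i := z')) vs t"
      "reaches n (y(i := z')) vs"
      using Cons.IH[OF lx rx Cons.prems(3,4) inv] by blast
    have nc: "\<not> (z' * y i < 0)"
      by (auto simp: z'_def mult.commute)
    show ?thesis
    proof (intro exI[of _ "(i, z') # vs"] conjI allI impI)
      show "legal_seq Os 0 n W y ((i, z') # vs)" using vs(1) i z'P by (simp add: legal_Cons)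
      show "reaches n y ((i, z') # vs)" using vs(3) by (simp add: reaches_Cons)
      fix t assume "t < length ((i, z') # vs)"
      then show "\<not> crossing_update 0 y ((i, z') # vs) t"
        using vs(2) nc by (cases t) (auto simp: cross_Cons0 cross_ConsS)
    qed
  qed
qed

theorem lemma3:
  fixes n :: nat and m M :: int and W :: "nat \<Rightarrow> nat \<Rightarrow> real" and x0 :: "nat \<Rightarrow> int"
  assumes "n \<ge> 1" and "m \<ge> 1" and "M \<ge> 1"
    and "row_stochastic n W"
    and "\<forall>j\<in>{1..n}. x0 j \<in> opinions m M"
    and "\<exists>us. legal_seq (opinions m M) 0 n W x0 us \<and> reaches n x0 us"
  shows "\<exists>us. legal_seq (opinions m M) 0 n W x0 us
               \<and> (\<forall>t < length us. \<not> crossing_update 0 x0 us t)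
               \<and> reaches n x0 us"
proof -
  obtain us where us: "legal_seq (opinions m M) 0 n W x0 us" "reaches n x0 us" using assms(6) by blast
  have "0 \<in> opinions m M" using assms(2,3) by (simp add: opinions_def)
  moreover have "\<forall>i\<in>{1..n}. \<forall>j\<in>{1..n}. W i j \<ge> 0" using assms(4) by (simp add: row_stochastic_def)
  ultimately show ?thesis using main[OF us] by blast
qed

end
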